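(* Let $\gamma\ge2$. For every $G\in\mathcal S(\mathbb R)$, $$\lim_{n\to\infty}\frac{[\Theta(n)]^2}{n^2}\Big\{\sum_{x,y\in\mathbb Z}[G(\tfrac yn)-G(\tfrac xn)]^4p^2(y-x)+\sum_{x\in\mathbb Z}\Big[\sum_{y\in\mathbb Z}p(y-x)[G(\tfrac yn)-G(\tfrac xn)]^2\Big]^2\Big\}=0.$$
   Context: Let $p(0)=0$, $p(x)=c_\gamma|x|^{-\gamma-1}$ for $x\ne0$, with $c_\gamma$ the constant making $\sum_xp(x)=1$. $\Theta(n)=n^2$ if $\gamma>2$ and $\Theta(n)=n^2/\log n$ if $\gamma=2$. $\mathcal S(\mathbb R)$ is the Schwartz space. *)

theory Defs
  imports "HOL-Analysis.Analysis"
begin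

text \<open>Normalising constant c_gamma: makes sum over x in Z of p(x) equal to 1.\<close>
definition c_gamma :: "real \<Rightarrow> real" where
  "c_gamma \<gamma> = 1 / (\<Sum>\<^sub>\<infinity>x\<in>(UNIV - {0::int}). \<bar>real_of_int x\<bar> powr (-\<gamma> - 1))"

definition jump_p :: "real \<Rightarrow> int \<Rightarrow> real" where
  "jump_p \<gamma> x = (if x = 0 then 0 else c_gamma \<gamma> * \<bar>real_of_int x\<bar> powr (-\<gamma> - 1))"

definition Theta :: "real \<Rightarrow> nat \<Rightarrow> real" where
  "Theta \<gamma> n = (if \<gamma> > 2 then (real n)\<^sup>2 else (real n)\<^sup>2 / ln (real n))"

definition schwartz :: "(real \<Rightarrow> real) \<Rightarrow> bool" where
  "schwartz G \<longleftrightarrow>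
     (\<forall>j x. ((deriv ^^ j) G) differentiable (at x)) \<and>
     (\<forall>j k. bounded (range (\<lambda>x. x ^ k * (deriv ^^ j) G x)))"

end

theory Submission
  imports Defs "HOL-Real_Asymp.Real_Asymp"
begin


lemma tele_aux:
  assumes "n \<ge> 1" "M \<ge> n"
  shows "(\<Sum>k=Suc n..M. 1 / (real k)\<^sup>2) \<le> 1 / real n - 1 / real M"
  using assms(2)
proof (induction M rule: dec_induct)
  case base then show ?case by simp
next
  case (step m)
  have "(\<Sum>k=Suc n..Suc m. 1 / (real k)\<^sup>2) = (\<Sum>k=Suc n..m. 1 / (real k)\<^sup>2) + 1 / (real (Suc m))\<^sup>2"
    using step by simp
  also have "\<dots> \<le> 1 / real n - 1 / real m + 1 / (real (Suc m))\<^sup>2" using step by simp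
  also have "\<dots> \<le> 1 / real n - 1 / real (Suc m)"
  proof -
    have m: "real m \<ge> 1" using step assms by simp
    have "1 / (real (Suc m))\<^sup>2 \<le> 1 / (real m * real (Suc m))"
      using m by (intro divide_left_mono) (auto simp: power2_eq_square)
    also have "\<dots> = 1 / real m - 1 / real (Suc m)"
      using m by (simp add: field_simps)
    finally have "1 / (real (Suc m))\<^sup>2 \<le> 1 / real m - 1 / real (Suc m)" .
    then show ?thesis by simp
  qed
  finally show ?case .
qed

lemma tele:
  assumes "n \<ge> 1"
  shows "(\<Sum>k=Suc n..M. 1 / (real k)\<^sup>2) \<le> 1 / real n"
proof (cases "M \<ge> n")
  case True
  with tele_aux[OF assms True] show ?thesis by (smt (verit) divide_nonneg_nonneg of_nat_0_le_iff)
next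
  case False then show ?thesis by simp
qed

lemma split_sum_nat:
  fixes f :: "nat \<Rightarrow> real"
  assumes "\<And>k. f k \<ge> 0"
  shows "(\<Sum>k=1..M. f k) \<le> (\<Sum>k=1..n. f k) + (\<Sum>k=Suc n..M. f k)"
proof (cases "M \<le> n")
  case True
  have "(\<Sum>k=1..M. f k) \<le> (\<Sum>k=1..n. f k)"
    by (rule sum_mono2) (use True assms in auto)
  moreover have "(\<Sum>k=Suc n..M. f k) \<ge> 0" by (rule sum_nonneg) (use assms in auto)
  ultimately show ?thesis by linarith
next
  case False
  then have "{1..M} = {1..n} \<union> {Suc n..M}" by auto
  then have "(\<Sum>k=1..M. f k) = (\<Sum>k=1..n. f k) + (\<Sum>k=Suc n..M. f k)"
    by (simp add: sum.union_disjoint ivl_disj_int)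
  then show ?thesis by simp
qed

lemma phi_nat:
  assumes "n \<ge> 1"
  shows "(\<Sum>k=1..M. 1 / (1 + (real k / real n)\<^sup>2)) \<le> 2 * real n"
proof -
  let ?f = "\<lambda>k. 1 / (1 + (real k / real n)\<^sup>2)"
  have "(\<Sum>k=1..M. ?f k) \<le> (\<Sum>k=1..n. ?f k) + (\<Sum>k=Suc n..M. ?f k)"
    by (rule split_sum_nat) (simp add: add_pos_nonneg)
  also have "(\<Sum>k=1..n. ?f k) \<le> (\<Sum>k=1..n. 1)"
    by (rule sum_mono) (simp add: add_pos_nonneg)
  also have "(\<Sum>k=Suc n..M. ?f k) \<le> (\<Sum>k=Suc n..M. (real n)\<^sup>2 * (1 / (real k)\<^sup>2))"
  proof (rule sum_mono)
    fix k assume "k \<in> {Suc n..M}"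
    then have k: "real k > 0" by simp
    have "?f k = (real n)\<^sup>2 / ((real n)\<^sup>2 + (real k)\<^sup>2)"
      using assms by (simp add: field_simps power2_eq_square)
    also have "\<dots> \<le> (real n)\<^sup>2 / (real k)\<^sup>2"
      using k by (intro divide_left_mono) (auto intro!: mult_pos_pos add_nonneg_pos)
    finally show "?f k \<le> (real n)\<^sup>2 * (1 / (real k)\<^sup>2)" by simp
  qed
  also have "\<dots> = (real n)\<^sup>2 * (\<Sum>k=Suc n..M. 1 / (real k)\<^sup>2)"
    by (simp add: sum_distrib_left)
  also have "\<dots> \<le> (real n)\<^sup>2 * (1 / real n)"
    by (rule mult_left_mono[OF tele[OF assms]]) simp
  finally show ?thesis using assms by (simp add: power2_eq_square)
qed

lemma harm_bound:
  assumes "n \<ge> 1"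
  shows "(harm n :: real) \<le> 1 + ln (real n)"
  using euler_mascheroni_sequence_decreasing[of 1 n] assms by (simp add: harm_def)

lemma w_nat:
  assumes "n \<ge> 1"
  shows "(\<Sum>k=1..M. min 1 ((real k / real n)\<^sup>2) / (real k)^3) \<le> (2 + ln (real n)) / (real n)\<^sup>2"
proof -
  let ?f = "\<lambda>k. min 1 ((real k / real n)\<^sup>2) / (real k)^3"
  have "(\<Sum>k=1..M. ?f k) \<le> (\<Sum>k=1..n. ?f k) + (\<Sum>k=Suc n..M. ?f k)"
    by (rule split_sum_nat) simp
  also have "(\<Sum>k=1..n. ?f k) \<le> (\<Sum>k=1..n. inverse (real k) / (real n)\<^sup>2)"
  proof (rule sum_mono)
    fix k assume "k \<in> {1..n}"
    then have k: "real k \<ge> 1" by simp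
    have "?f k \<le> (real k / real n)\<^sup>2 / (real k)^3"
      by (intro divide_right_mono) auto
    also have "\<dots> = inverse (real k) / (real n)\<^sup>2"
      using k by (simp add: field_simps power2_eq_square power3_eq_cube)
    finally show "?f k \<le> inverse (real k) / (real n)\<^sup>2" .
  qed
  also have "\<dots> = harm n / (real n)\<^sup>2"
    by (simp add: harm_def sum_divide_distrib)
  also have "(\<Sum>k=Suc n..M. ?f k) \<le> (\<Sum>k=Suc n..M. (1 / real n) * (1 / (real k)\<^sup>2))"
  proof (rule sum_mono)
    fix k assume "k \<in> {Suc n..M}"
    then have k: "real k \<ge> real n + 1" by simp
    have "?f k \<le> 1 / (real k)^3"
      by (intro divide_right_mono) auto
    also have "\<dots> \<le> (1 / real n) * (1 / (real k)\<^sup>2)"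
      using k assms by (simp add: field_simps power2_eq_square power3_eq_cube mult_mono)
    finally show "?f k \<le> (1 / real n) * (1 / (real k)\<^sup>2)" .
  qed
  also have "\<dots> = (1 / real n) * (\<Sum>k=Suc n..M. 1 / (real k)\<^sup>2)"
    by (simp add: sum_distrib_left)
  also have "\<dots> \<le> (1 / real n) * (1 / real n)"
    by (rule mult_left_mono[OF tele[OF assms]]) simp
  finally have "(\<Sum>k=1..M. ?f k) \<le> harm n / (real n)\<^sup>2 + 1 / (real n)\<^sup>2"
    by (simp add: power2_eq_square)
  also have "\<dots> \<le> (1 + ln (real n)) / (real n)\<^sup>2 + 1 / (real n)\<^sup>2"
    using harm_bound[OF assms] by (simp add: divide_right_mono)
  finally show ?thesis by (simp add: add_divide_distrib[symmetric])
qed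



lemma sym_sum_int:
  fixes f :: "int \<Rightarrow> real"
  assumes "\<And>k. f (-k) = f k"
  shows "(\<Sum>z\<in>{-int M..int M}. f z) = f 0 + 2 * (\<Sum>k=1..M. f (int k))"
proof (induction M)
  case 0 then show ?case by simp
next
  case (Suc M)
  have eq: "{-int (Suc M)..int (Suc M)} = insert (-int (Suc M)) (insert (int (Suc M)) {-int M..int M})"
    by auto
  have "(\<Sum>z\<in>{-int (Suc M)..int (Suc M)}. f z) = f (-int (Suc M)) + f (int (Suc M)) + (\<Sum>z\<in>{-int M..int M}. f z)"
    unfolding eq by simp
  moreover have "f (-int (Suc M)) = f (int (Suc M))" by (rule assms)
  ultimately show ?case using Suc by simp
qed

lemma even_sum:
  fixes f :: "int \<Rightarrow> real"
  assumes "\<And>k. f (-k) = f k" "\<And>k. f k \<ge> 0" "\<And>M. (\<Sum>k=1..M. f (int k)) \<le> B"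
    and "finite Z"
  shows "(\<Sum>z\<in>Z. f z) \<le> f 0 + 2 * B"
proof -
  define M where "M = nat (\<Sum>z\<in>Z. \<bar>z\<bar>)"
  have "Z \<subseteq> {-int M..int M}"
  proof
    fix z assume "z \<in> Z"
    then have "\<bar>z\<bar> \<le> (\<Sum>z\<in>Z. \<bar>z\<bar>)" using assms(4) by (intro member_le_sum) auto
    then show "z \<in> {-int M..int M}" unfolding M_def by auto
  qed
  then have "(\<Sum>z\<in>Z. f z) \<le> (\<Sum>z\<in>{-int M..int M}. f z)"
    by (intro sum_mono2) (use assms in auto)
  also have "\<dots> = f 0 + 2 * (\<Sum>k=1..M. f (int k))" by (rule sym_sum_int) (rule assms)
  also have "\<dots> \<le> f 0 + 2 * B" using assms(3)[of M] by simp
  finally show ?thesis .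
qed

definition phi :: "real \<Rightarrow> real" where "phi t = 1 / (1 + t\<^sup>2)"

lemma phi_pos: "phi t > 0" unfolding phi_def by (simp add: add_pos_nonneg)
lemma phi_le1: "phi t \<le> 1" unfolding phi_def by (simp add: divide_le_eq add_pos_nonneg)

lemma phi_int:
  assumes "n \<ge> 1" "finite X"
  shows "(\<Sum>x\<in>X. phi ((real_of_int x + real_of_int a) / real n)) \<le> 1 + 4 * real n"
proof -
  have "(\<Sum>x\<in>X. phi ((real_of_int x + real_of_int a) / real n)) = (\<Sum>y\<in>(\<lambda>x. x + a) ` X. phi (real_of_int y / real n))"
    by (subst sum.reindex) (auto simp: inj_on_def)
  also have "\<dots> \<le> phi (real_of_int 0 / real n) + 2 * (2 * real n)"
  proof (rule even_sum[where f = "\<lambda>y. phi (real_of_int y / real n)"])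
    fix M show "(\<Sum>k=1..M. phi (real_of_int (int k) / real n)) \<le> 2 * real n"
      using phi_nat[OF assms(1), of M] by (simp add: phi_def)
  qed (use assms phi_pos in \<open>auto simp: phi_def less_imp_le\<close>)
  finally show ?thesis by (simp add: phi_def)
qed

definition qf :: "nat \<Rightarrow> int \<Rightarrow> real" where
  "qf n z = (if z = 0 then 0 else min 1 ((real_of_int z / real n)\<^sup>2) / \<bar>real_of_int z\<bar>^3)"

lemma qf_nonneg: "qf n z \<ge> 0" unfolding qf_def by auto

lemma w_int:
  assumes "n \<ge> 1" "finite Z"
  shows "(\<Sum>z\<in>Z. qf n z) \<le> 2 * ((2 + ln (real n)) / (real n)\<^sup>2)"
proof -
  have "(\<Sum>z\<in>Z. qf n z) \<le> qf n 0 + 2 * ((2 + ln (real n)) / (real n)\<^sup>2)"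
  proof (rule even_sum)
    fix M show "(\<Sum>k=1..M. qf n (int k)) \<le> (2 + ln (real n)) / (real n)\<^sup>2"
    proof -
      have "(\<Sum>k=1..M. qf n (int k)) = (\<Sum>k=1..M. min 1 ((real k / real n)\<^sup>2) / (real k)^3)"
        by (rule sum.cong) (auto simp: qf_def)
      then show ?thesis using w_nat[OF assms(1)] by simp
    qed
  qed (use assms qf_nonneg in \<open>auto simp: qf_def\<close>)
  then show ?thesis by (simp add: qf_def)
qed

lemma c_gamma_nonneg: "c_gamma g \<ge> 0"
  unfolding c_gamma_def by (simp add: infsum_nonneg)

lemma p_nonneg: "jump_p g z \<ge> 0"
  unfolding jump_p_def using c_gamma_nonneg by auto

lemma p_bound:
  assumes "g \<ge> 2" "z \<noteq> 0"
  shows "jump_p g z \<le> c_gamma g / \<bar>real_of_int z\<bar>^3"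
proof -
  have z: "\<bar>real_of_int z\<bar> \<ge> 1" using assms by linarith
  have "\<bar>real_of_int z\<bar> powr (-g - 1) \<le> \<bar>real_of_int z\<bar> powr (-3)"
    using z assms by (intro powr_mono) auto
  also have "\<dots> = 1 / \<bar>real_of_int z\<bar>^3"
    using z by (simp add: powr_minus powr_realpow divide_inverse)
  finally have "\<bar>real_of_int z\<bar> powr (-g - 1) \<le> 1 / \<bar>real_of_int z\<bar>^3" .
  then show ?thesis unfolding jump_p_def using assms c_gamma_nonneg
    by (simp add: mult_left_mono divide_inverse)
qed

lemma pq_bound:
  assumes "g \<ge> 2"
  shows "jump_p g z * min 1 ((real_of_int z / real n)\<^sup>2) \<le> c_gamma g * qf n z"
proof (cases "z = 0")
  case True then show ?thesis by (simp add: jump_p_def qf_def)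
next
  case False
  then have "jump_p g z * min 1 ((real_of_int z / real n)\<^sup>2) \<le> c_gamma g / \<bar>real_of_int z\<bar>^3 * min 1 ((real_of_int z / real n)\<^sup>2)"
    using p_bound[OF assms False] by (intro mult_right_mono) auto
  then show ?thesis using False by (simp add: qf_def)
qed



lemma decay_sq:
  fixes F :: "real \<Rightarrow> real"
  assumes "bounded (range (\<lambda>x. x ^ 0 * F x))" "bounded (range (\<lambda>x. x ^ 2 * F x))"
  shows "\<exists>K\<ge>0. \<forall>t. (F t)\<^sup>2 \<le> K * phi t"
proof -
  obtain a where a: "\<And>t. \<bar>F t\<bar> \<le> a" using assms(1) unfolding bounded_iff by auto
  obtain b where b: "\<And>t. \<bar>t^2 * F t\<bar> \<le> b" using assms(2) unfolding bounded_iff by auto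
  have ab: "a + b \<ge> 0" using a[of 0] b[of 0] by simp
  have main: "\<bar>F t\<bar> \<le> (a + b) * phi t" for t
  proof -
    have "(1 + t\<^sup>2) * \<bar>F t\<bar> = \<bar>F t\<bar> + \<bar>t^2 * F t\<bar>" by (simp add: algebra_simps abs_mult)
    also have "\<dots> \<le> a + b" using a[of t] b[of t] by simp
    finally have "(1 + t\<^sup>2) * \<bar>F t\<bar> \<le> a + b" .
    then show ?thesis unfolding phi_def by (simp add: field_simps add_pos_nonneg)
  qed
  have "(F t)\<^sup>2 \<le> (a + b)\<^sup>2 * phi t" for t
  proof -
    have "(F t)\<^sup>2 = \<bar>F t\<bar>\<^sup>2" by simp
    also have "\<dots> \<le> ((a + b) * phi t)\<^sup>2" using main[of t] by (intro power_mono) auto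
    also have "\<dots> = (a + b)\<^sup>2 * (phi t * phi t)" by (simp add: power2_eq_square)
    also have "\<dots> \<le> (a + b)\<^sup>2 * phi t"
      using phi_le1[of t] phi_pos[of t] by (intro mult_left_mono) (auto simp: mult_le_cancel_right1)
    finally show ?thesis .
  qed
  then show ?thesis by (intro exI[of _ "(a+b)\<^sup>2"]) auto
qed

lemma mvt_abs:
  fixes G :: "real \<Rightarrow> real"
  assumes der: "\<And>x. DERIV G x :> G' x"
  shows "\<exists>\<xi>. \<bar>\<xi> - a\<bar> \<le> \<bar>b - a\<bar> \<and> G b - G a = (b - a) * G' \<xi>"
proof -
  consider "a < b" | "a = b" | "b < a" by linarith
  then show ?thesis
  proof cases
    case 1
    from MVT2[OF 1 der] obtain z where "a < z" "z < b" "G b - G a = (b - a) * G' z" by blast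
    then show ?thesis by (intro exI[of _ z]) auto
  next
    case 2 then show ?thesis by auto
  next
    case 3
    from MVT2[OF 3 der] obtain z where "b < z" "z < a" "G a - G b = (a - b) * G' z" by blast
    then show ?thesis by (intro exI[of _ z]) (auto simp: algebra_simps)
  qed
qed

lemma phi_shift: assumes "\<bar>\<xi> - u\<bar> \<le> 1" shows "phi \<xi> \<le> 3 * phi u"
proof -
  have "(u - \<xi>)\<^sup>2 \<le> 1" using assms abs_le_square_iff[of "\<xi> - u" 1] by (simp add: power2_commute)
  moreover have "u\<^sup>2 \<le> 2 * \<xi>\<^sup>2 + 2 * (u - \<xi>)\<^sup>2"
    using sum_squares_ge_zero[of "\<xi> - (u - \<xi>)" 0] by (simp add: power2_eq_square algebra_simps)
  ultimately have "1 + u\<^sup>2 \<le> 3 * (1 + \<xi>\<^sup>2)" using zero_le_power2[of \<xi>] by (smt (verit))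
  then show ?thesis unfolding phi_def
    by (simp add: field_simps add_pos_nonneg)
qed

lemma G_diff_bound:
  assumes "schwartz G"
  shows "\<exists>L\<ge>0. \<forall>u h. (G (u + h) - G u)\<^sup>2 \<le> L * min 1 (h\<^sup>2) * (phi u + phi (u + h))"
proof -
  have der: "DERIV G x :> deriv G x" for x
    using assms unfolding schwartz_def DERIV_deriv_iff_real_differentiable
    by (metis funpow_0)
  have b0: "bounded (range (\<lambda>x. x ^ k * G x))" for k
    using assms unfolding schwartz_def by (metis funpow_0)
  have b1: "bounded (range (\<lambda>x. x ^ k * deriv G x))" for k
    using assms unfolding schwartz_def by (metis One_nat_def funpow.simps(2) funpow_0 comp_apply)
  obtain K0 where K0: "K0 \<ge> 0" "\<And>t. (G t)\<^sup>2 \<le> K0 * phi t" using decay_sq[OF b0 b0] by blast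
  obtain K1 where K1: "K1 \<ge> 0" "\<And>t. (deriv G t)\<^sup>2 \<le> K1 * phi t" using decay_sq[OF b1 b1] by blast
  define L where "L = 3 * K1 + 2 * K0"
  have L: "L \<ge> 0" "L \<ge> 3 * K1" "L \<ge> 2 * K0" using K0 K1 unfolding L_def by auto
  have "(G (u + h) - G u)\<^sup>2 \<le> L * min 1 (h\<^sup>2) * (phi u + phi (u + h))" for u h
  proof (cases "\<bar>h\<bar> \<le> 1")
    case True
    then have "h\<^sup>2 \<le> 1" using abs_le_square_iff[of h 1] by simp
    then have mh: "min 1 (h\<^sup>2) = h\<^sup>2" by (simp add: min_def)
    obtain \<xi> where xi: "\<bar>\<xi> - u\<bar> \<le> \<bar>h\<bar>" "G (u + h) - G u = h * deriv G \<xi>"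
      using mvt_abs[OF der, of u "u + h"] by auto
    have "(G (u + h) - G u)\<^sup>2 = h\<^sup>2 * (deriv G \<xi>)\<^sup>2" using xi by (simp add: power_mult_distrib)
    also have "\<dots> \<le> h\<^sup>2 * (K1 * (3 * phi u))"
    proof (rule mult_left_mono)
      have "(deriv G \<xi>)\<^sup>2 \<le> K1 * phi \<xi>" by (rule K1)
      also have "\<dots> \<le> K1 * (3 * phi u)" using phi_shift[of \<xi> u] xi True K1 by (intro mult_left_mono) auto
      finally show "(deriv G \<xi>)\<^sup>2 \<le> K1 * (3 * phi u)" .
    qed simp
    also have "\<dots> \<le> h\<^sup>2 * (L * (phi u + phi (u + h)))"
    proof (rule mult_left_mono)
      have "K1 * (3 * phi u) = (3 * K1) * phi u" by simp
      also have "\<dots> \<le> L * phi u" using L phi_pos[of u] by (intro mult_right_mono) auto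
      also have "\<dots> \<le> L * (phi u + phi (u + h))" using L phi_pos[of "u+h"] by (intro mult_left_mono) auto
      finally show "K1 * (3 * phi u) \<le> L * (phi u + phi (u + h))" .
    qed simp
    finally show ?thesis unfolding mh by (simp add: algebra_simps)
  next
    case False
    then have "\<not> h\<^sup>2 \<le> 1" using abs_le_square_iff[of h 1] by simp
    then have mh: "min 1 (h\<^sup>2) = 1" by (simp add: min_def)
    have "(G (u + h) - G u)\<^sup>2 \<le> 2 * (G (u + h))\<^sup>2 + 2 * (G u)\<^sup>2"
      using sum_squares_ge_zero[of "G (u + h) + G u" 0] by (simp add: power2_eq_square algebra_simps)
    also have "\<dots> \<le> 2 * (K0 * phi (u + h)) + 2 * (K0 * phi u)"
      using K0(2)[of u] K0(2)[of "u+h"] by simp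
    also have "\<dots> = (2 * K0) * (phi u + phi (u + h))" by (simp add: algebra_simps)
    also have "\<dots> \<le> L * (phi u + phi (u + h))"
      using L phi_pos[of u] phi_pos[of "u+h"] by (intro mult_right_mono) auto
    finally show ?thesis unfolding mh by simp
  qed
  then show ?thesis using L by blast
qed



lemma bound_infsum:
  fixes f :: "'a \<Rightarrow> real"
  assumes "\<And>x. x \<in> A \<Longrightarrow> f x \<ge> 0" "\<And>F. finite F \<Longrightarrow> F \<subseteq> A \<Longrightarrow> sum f F \<le> b"
  shows "f summable_on A" "infsum f A \<le> b"
proof -
  show s: "f summable_on A"
    by (rule nonneg_bdd_above_summable_on) (use assms in \<open>auto intro!: bdd_aboveI2\<close>)
  show "infsum f A \<le> b" by (rule infsum_le_finite_sums[OF s]) (use assms in auto)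
qed

lemma infsum_finite_sum:
  fixes g :: "'i \<Rightarrow> 'a \<Rightarrow> real"
  assumes "finite X" "\<And>x. x \<in> X \<Longrightarrow> g x summable_on A"
  shows "(\<lambda>y. \<Sum>x\<in>X. g x y) summable_on A \<and> infsum (\<lambda>y. \<Sum>x\<in>X. g x y) A = (\<Sum>x\<in>X. infsum (g x) A)"
  using assms
proof (induction X rule: finite_induct)
  case empty then show ?case by simp
next
  case (insert a X)
  then have s1: "g a summable_on A" and IH: "(\<lambda>y. \<Sum>x\<in>X. g x y) summable_on A"
      "infsum (\<lambda>y. \<Sum>x\<in>X. g x y) A = (\<Sum>x\<in>X. infsum (g x) A)" by auto
  have eq: "(\<lambda>y. \<Sum>x\<in>insert a X. g x y) = (\<lambda>y. g a y + (\<Sum>x\<in>X. g x y))"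
    using insert by simp
  show ?case unfolding eq
    using summable_on_add[OF s1 IH(1)] infsum_add[OF s1 IH(1)] IH(2) insert by simp
qed

lemma qf_le:
  assumes "n \<ge> 1" shows "qf n z \<le> 1 / (real n)\<^sup>2"
proof (cases "z = 0")
  case True then show ?thesis by (simp add: qf_def)
next
  case False
  then have z: "\<bar>real_of_int z\<bar> \<ge> 1" by linarith
  have "qf n z \<le> (real_of_int z / real n)\<^sup>2 / \<bar>real_of_int z\<bar>^3"
    unfolding qf_def using False by (simp add: divide_right_mono)
  also have "\<dots> = 1 / ((real n)\<^sup>2 * \<bar>real_of_int z\<bar>)"
    using z by (simp add: field_simps power2_eq_square power3_eq_cube)
  also have "\<dots> \<le> 1 / (real n)\<^sup>2"
    using z assms by (intro divide_left_mono) auto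
  finally show ?thesis .
qed

context
  fixes \<gamma> :: real and G :: "real \<Rightarrow> real" and L :: real and n :: nat
  assumes gam: "\<gamma> \<ge> 2" and L0: "L \<ge> 0"
    and GL: "\<And>u h. (G (u + h) - G u)\<^sup>2 \<le> L * min 1 (h\<^sup>2) * (phi u + phi (u + h))"
    and n1: "n \<ge> 1"
begin

definition "cc = c_gamma \<gamma>"
definition "gg x y = jump_p \<gamma> (y - x) * (G (real_of_int y / real n) - G (real_of_int x / real n))\<^sup>2"
definition "Wn = 2 * ((2 + ln (real n)) / (real n)\<^sup>2)"
definition "PP = L * cc * (2 * (1 + 4 * real n)) * Wn"
definition "Imax = 2 * L * cc * Wn"

lemma cc0: "cc \<ge> 0" unfolding cc_def by (rule c_gamma_nonneg)

lemma gg_nonneg: "gg x y \<ge> 0" unfolding gg_def by (simp add: p_nonneg)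

lemma gg_bound1: "gg x (x + z) \<le> L * cc * qf n z * (phi (real_of_int x / real n) + phi ((real_of_int x + real_of_int z) / real n))"
proof -
  let ?u = "real_of_int x / real n" and ?h = "real_of_int z / real n"
  have e: "real_of_int (x + z) / real n = ?u + ?h" by (simp add: add_divide_distrib)
  have "gg x (x + z) = jump_p \<gamma> z * (G (?u + ?h) - G ?u)\<^sup>2" unfolding gg_def e by simp
  also have "\<dots> \<le> jump_p \<gamma> z * (L * min 1 (?h\<^sup>2) * (phi ?u + phi (?u + ?h)))"
    by (intro mult_left_mono GL p_nonneg)
  also have "\<dots> = L * (jump_p \<gamma> z * min 1 (?h\<^sup>2)) * (phi ?u + phi (?u + ?h))" by simp
  also have "\<dots> \<le> L * (cc * qf n z) * (phi ?u + phi (?u + ?h))"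
    using pq_bound[OF gam, of z n] L0 phi_pos[of ?u] phi_pos[of "?u + ?h"]
    unfolding cc_def by (intro mult_right_mono mult_left_mono) auto
  finally show ?thesis by (simp add: add_divide_distrib)
qed

lemma gg_bound2: "gg x (x + z) \<le> 2 * L * cc * qf n z"
proof -
  have "gg x (x + z) \<le> L * cc * qf n z * (phi (real_of_int x / real n) + phi ((real_of_int x + real_of_int z) / real n))"
    by (rule gg_bound1)
  also have "\<dots> \<le> L * cc * qf n z * 2"
    using phi_le1[of "real_of_int x / real n"] phi_le1[of "(real_of_int x + real_of_int z) / real n"]
      L0 cc0 qf_nonneg[of n z]
    by (intro mult_left_mono) auto
  finally show ?thesis by simp
qed

lemma gg_bound2': "gg x y \<le> 2 * L * cc * qf n (y - x)"
  using gg_bound2[of x "y - x"] by simp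

lemma gg_sup: "gg x y \<le> 2 * L * cc / (real n)\<^sup>2"
proof -
  have "gg x y \<le> 2 * L * cc * qf n (y - x)" by (rule gg_bound2')
  also have "\<dots> \<le> 2 * L * cc * (1 / (real n)\<^sup>2)"
    using qf_le[OF n1] L0 cc0 by (intro mult_left_mono) auto
  finally show ?thesis by simp
qed

lemma Wn_nonneg: "Wn \<ge> 0"
  unfolding Wn_def using n1 by (auto intro!: divide_nonneg_nonneg add_nonneg_nonneg)

lemma row_sum: "finite Y \<Longrightarrow> (\<Sum>y\<in>Y. gg x y) \<le> Imax"
proof -
  assume Y: "finite Y"
  have "(\<Sum>y\<in>Y. gg x y) \<le> (\<Sum>y\<in>Y. 2 * L * cc * qf n (y - x))"
    by (intro sum_mono gg_bound2')
  also have "\<dots> = 2 * L * cc * (\<Sum>z\<in>(\<lambda>y. y - x) ` Y. qf n z)"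
    by (subst sum.reindex) (auto simp: inj_on_def sum_distrib_left)
  also have "\<dots> \<le> 2 * L * cc * Wn"
    unfolding Wn_def using w_int[OF n1, of "(\<lambda>y. y - x) ` Y"] Y L0 cc0 by (intro mult_left_mono) auto
  finally show ?thesis unfolding Imax_def .
qed

lemma pair_sum: "finite F \<Longrightarrow> (\<Sum>(x,y)\<in>F. gg x y) \<le> PP"
proof -
  assume F: "finite F"
  define F' where "F' = (\<lambda>(x,y). (x, y - x)) ` F"
  define X where "X = fst ` F'"
  define Z where "Z = snd ` F'"
  have fin: "finite X" "finite Z" "finite F'" using F unfolding X_def Z_def F'_def by auto
  have inj: "inj_on (\<lambda>(x::int,y::int). (x, y - x)) F" by (auto simp: inj_on_def)
  have "(\<Sum>(x,y)\<in>F. gg x y) = (\<Sum>(x,z)\<in>F'. gg x (x + z))"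
    unfolding F'_def by (subst sum.reindex[OF inj]) (auto intro!: sum.cong)
  also have "\<dots> \<le> (\<Sum>(x,z)\<in>X \<times> Z. gg x (x + z))"
    by (intro sum_mono2) (use fin in \<open>auto simp: gg_nonneg X_def Z_def rev_image_eqI\<close>)
  also have "\<dots> = (\<Sum>z\<in>Z. \<Sum>x\<in>X. gg x (x + z))"
    by (subst sum.swap) (simp add: sum.cartesian_product)
  also have "\<dots> \<le> (\<Sum>z\<in>Z. L * cc * qf n z * (2 * (1 + 4 * real n)))"
  proof (rule sum_mono)
    fix z assume "z \<in> Z"
    have "(\<Sum>x\<in>X. gg x (x + z)) \<le> (\<Sum>x\<in>X. L * cc * qf n z * (phi ((real_of_int x + real_of_int 0) / real n) + phi ((real_of_int x + real_of_int z) / real n)))"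
      by (intro sum_mono) (use gg_bound1 in simp)
    also have "\<dots> = L * cc * qf n z * ((\<Sum>x\<in>X. phi ((real_of_int x + real_of_int 0) / real n)) + (\<Sum>x\<in>X. phi ((real_of_int x + real_of_int z) / real n)))"
      by (simp only: sum_distrib_left[symmetric] sum.distrib[symmetric])
    also have "\<dots> \<le> L * cc * qf n z * (2 * (1 + 4 * real n))"
      using phi_int[OF n1 fin(1), of 0] phi_int[OF n1 fin(1), of z] L0 cc0 qf_nonneg[of n z]
      by (intro mult_left_mono) auto
    finally show "(\<Sum>x\<in>X. gg x (x + z)) \<le> L * cc * qf n z * (2 * (1 + 4 * real n))" .
  qed
  also have "\<dots> = L * cc * (2 * (1 + 4 * real n)) * (\<Sum>z\<in>Z. qf n z)"
    by (simp only: sum_distrib_left sum_distrib_right mult_ac)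
  also have "\<dots> \<le> L * cc * (2 * (1 + 4 * real n)) * Wn"
    unfolding Wn_def using w_int[OF n1 fin(2)] L0 cc0 by (intro mult_left_mono) auto
  finally show ?thesis unfolding PP_def .
qed


lemma A_eq: "(\<lambda>(x, y). (G (real_of_int y / real n) - G (real_of_int x / real n)) ^ 4 * (jump_p \<gamma> (y - x))\<^sup>2)
   = (\<lambda>(x, y). (gg x y)\<^sup>2)"
  by (auto simp: gg_def fun_eq_iff power_mult_distrib power2_eq_square[symmetric] power_mult[symmetric] mult.commute)

lemma A_bound:
  "(\<Sum>\<^sub>\<infinity>(x, y)\<in>(UNIV :: (int \<times> int) set).
          (G (real_of_int y / real n) - G (real_of_int x / real n)) ^ 4 * (jump_p \<gamma> (y - x))\<^sup>2)
     \<le> 2 * L * cc / (real n)\<^sup>2 * PP"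
  unfolding A_eq
proof (rule bound_infsum(2))
  fix F :: "(int \<times> int) set" assume F: "finite F"
  have "(\<Sum>p\<in>F. (case p of (x, y) \<Rightarrow> (gg x y)\<^sup>2)) \<le> (\<Sum>p\<in>F. 2 * L * cc / (real n)\<^sup>2 * (case p of (x, y) \<Rightarrow> gg x y))"
  proof (intro sum_mono)
    fix p :: "int \<times> int" assume "p \<in> F"
    obtain x y where p: "p = (x, y)" by fastforce
    have "(gg x y)\<^sup>2 = gg x y * gg x y" by (simp add: power2_eq_square)
    also have "\<dots> \<le> 2 * L * cc / (real n)\<^sup>2 * gg x y"
      using gg_sup[of x y] gg_nonneg[of x y] by (intro mult_right_mono) auto
    finally show "(case p of (x, y) \<Rightarrow> (gg x y)\<^sup>2) \<le> 2 * L * cc / (real n)\<^sup>2 * (case p of (x, y) \<Rightarrow> gg x y)"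
      unfolding p by simp
  qed
  also have "\<dots> = 2 * L * cc / (real n)\<^sup>2 * (\<Sum>(x,y)\<in>F. gg x y)"
    by (simp add: sum_distrib_left)
  also have "\<dots> \<le> 2 * L * cc / (real n)\<^sup>2 * PP"
    using pair_sum[OF F] L0 cc0 by (intro mult_left_mono) auto
  finally show "(\<Sum>p\<in>F. (case p of (x, y) \<Rightarrow> (gg x y)\<^sup>2)) \<le> 2 * L * cc / (real n)\<^sup>2 * PP" .
qed auto

lemma A_nonneg:
  "(\<Sum>\<^sub>\<infinity>(x, y)\<in>(UNIV :: (int \<times> int) set).
          (G (real_of_int y / real n) - G (real_of_int x / real n)) ^ 4 * (jump_p \<gamma> (y - x))\<^sup>2) \<ge> 0"
  unfolding A_eq by (rule infsum_nonneg) auto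

definition "II x = infsum (gg x) UNIV"

lemma II_props: "gg x summable_on UNIV" "II x \<le> Imax" "II x \<ge> 0"
proof -
  show "gg x summable_on UNIV" "II x \<le> Imax" unfolding II_def
    by (rule bound_infsum; use gg_nonneg row_sum in auto)+
  show "II x \<ge> 0" unfolding II_def by (rule infsum_nonneg) (use gg_nonneg in auto)
qed

lemma II_sum: "finite X \<Longrightarrow> (\<Sum>x\<in>X. II x) \<le> PP"
proof -
  assume X: "finite X"
  have h: "(\<lambda>y. \<Sum>x\<in>X. gg x y) summable_on UNIV \<and> infsum (\<lambda>y. \<Sum>x\<in>X. gg x y) UNIV = (\<Sum>x\<in>X. infsum (gg x) UNIV)"
    by (rule infsum_finite_sum[OF X]) (use II_props in auto)
  have "infsum (\<lambda>y. \<Sum>x\<in>X. gg x y) UNIV \<le> PP"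
  proof (rule bound_infsum(2))
    fix Y :: "int set" assume Y: "finite Y"
    have "(\<Sum>y\<in>Y. \<Sum>x\<in>X. gg x y) = (\<Sum>(x,y)\<in>X \<times> Y. gg x y)"
      by (subst sum.swap) (simp add: sum.cartesian_product)
    also have "\<dots> \<le> PP" using pair_sum X Y by auto
    finally show "(\<Sum>y\<in>Y. \<Sum>x\<in>X. gg x y) \<le> PP" .
  qed (use gg_nonneg in \<open>auto intro: sum_nonneg\<close>)
  then show ?thesis using h unfolding II_def by simp
qed

lemma B_bound:
  "(\<Sum>\<^sub>\<infinity>x\<in>(UNIV :: int set).
          (\<Sum>\<^sub>\<infinity>y\<in>(UNIV :: int set).
              jump_p \<gamma> (y - x) * (G (real_of_int y / real n) - G (real_of_int x / real n))\<^sup>2)\<^sup>2) \<le> Imax * PP"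
proof -
  have eq: "(\<lambda>x. (\<Sum>\<^sub>\<infinity>y\<in>(UNIV :: int set).
              jump_p \<gamma> (y - x) * (G (real_of_int y / real n) - G (real_of_int x / real n))\<^sup>2)\<^sup>2) = (\<lambda>x. (II x)\<^sup>2)"
    unfolding II_def gg_def by simp
  show ?thesis unfolding eq
  proof (rule bound_infsum(2))
    fix X :: "int set" assume X: "finite X"
    have "(\<Sum>x\<in>X. (II x)\<^sup>2) \<le> (\<Sum>x\<in>X. Imax * II x)"
      by (intro sum_mono) (use II_props in \<open>auto simp: power2_eq_square intro!: mult_right_mono\<close>)
    also have "\<dots> = Imax * (\<Sum>x\<in>X. II x)" by (simp add: sum_distrib_left)
    also have "\<dots> \<le> Imax * PP"
      using II_sum[OF X] II_props(2)[of 0] II_props(3)[of 0] by (intro mult_left_mono) auto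
    finally show "(\<Sum>x\<in>X. (II x)\<^sup>2) \<le> Imax * PP" .
  qed auto
qed

lemma B_nonneg:
  "(\<Sum>\<^sub>\<infinity>x\<in>(UNIV :: int set).
          (\<Sum>\<^sub>\<infinity>y\<in>(UNIV :: int set).
              jump_p \<gamma> (y - x) * (G (real_of_int y / real n) - G (real_of_int x / real n))\<^sup>2)\<^sup>2) \<ge> 0"
  by (rule infsum_nonneg) auto


lemma total_bound:
  "(\<Sum>\<^sub>\<infinity>(x, y)\<in>(UNIV :: (int \<times> int) set).
          (G (real_of_int y / real n) - G (real_of_int x / real n)) ^ 4 * (jump_p \<gamma> (y - x))\<^sup>2)
      + (\<Sum>\<^sub>\<infinity>x\<in>(UNIV :: int set).
          (\<Sum>\<^sub>\<infinity>y\<in>(UNIV :: int set).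
              jump_p \<gamma> (y - x) * (G (real_of_int y / real n) - G (real_of_int x / real n))\<^sup>2)\<^sup>2)
   \<le> 8 * (L * c_gamma \<gamma>)\<^sup>2 * ((5 + 2 * ln (real n)) * (1 + 4 * real n) * (2 + ln (real n)) / ((real n)\<^sup>2)\<^sup>2)"
proof -
  have "2 * L * cc / (real n)\<^sup>2 * PP + Imax * PP = 8 * (L * c_gamma \<gamma>)\<^sup>2 * ((5 + 2 * ln (real n)) * (1 + 4 * real n) * (2 + ln (real n)) / ((real n)\<^sup>2)\<^sup>2)"
    unfolding PP_def Imax_def Wn_def cc_def using n1 by (simp add: field_simps power2_eq_square)
  then show ?thesis using A_bound B_bound by linarith
qed

end



lemma lim_aux: "(\<lambda>n::nat. (real n)\<^sup>2 * ((5 + 2 * ln (real n)) * (1 + 4 * real n) * (2 + ln (real n)) / ((real n)\<^sup>2)\<^sup>2)) \<longlonglongrightarrow> 0"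
  by real_asymp

theorem propositionA6:
  fixes \<gamma> :: real and G :: "real \<Rightarrow> real"
  assumes "\<gamma> \<ge> 2" and "schwartz G"
  shows "(\<lambda>n::nat. (Theta \<gamma> n)\<^sup>2 / (real n)\<^sup>2 *
     ((\<Sum>\<^sub>\<infinity>(x, y)\<in>(UNIV :: (int \<times> int) set).
          (G (real_of_int y / real n) - G (real_of_int x / real n)) ^ 4 * (jump_p \<gamma> (y - x))\<^sup>2)
      + (\<Sum>\<^sub>\<infinity>x\<in>(UNIV :: int set).
          (\<Sum>\<^sub>\<infinity>y\<in>(UNIV :: int set).
              jump_p \<gamma> (y - x) * (G (real_of_int y / real n) - G (real_of_int x / real n))\<^sup>2)\<^sup>2)))
     \<longlonglongrightarrow> 0"
proof -
  obtain L where L0: "L \<ge> 0" and GL: "\<And>u h. (G (u + h) - G u)\<^sup>2 \<le> L * min 1 (h\<^sup>2) * (phi u + phi (u + h))"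
    using G_diff_bound[OF assms(2)] by blast
  define S where "S n = (\<Sum>\<^sub>\<infinity>(x, y)\<in>(UNIV :: (int \<times> int) set).
          (G (real_of_int y / real n) - G (real_of_int x / real n)) ^ 4 * (jump_p \<gamma> (y - x))\<^sup>2)
      + (\<Sum>\<^sub>\<infinity>x\<in>(UNIV :: int set).
          (\<Sum>\<^sub>\<infinity>y\<in>(UNIV :: int set).
              jump_p \<gamma> (y - x) * (G (real_of_int y / real n) - G (real_of_int x / real n))\<^sup>2)\<^sup>2)" for n :: nat
  define R where "R n = (real n)\<^sup>2 * ((5 + 2 * ln (real n)) * (1 + 4 * real n) * (2 + ln (real n)) / ((real n)\<^sup>2)\<^sup>2)" for n :: nat
  have S0: "S n \<ge> 0" if "n \<ge> 1" for n
    unfolding S_def using A_nonneg[OF assms(1) L0 GL that] B_nonneg[OF assms(1) L0 GL that] by linarith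
  have SB: "S n \<le> 8 * (L * c_gamma \<gamma>)\<^sup>2 * ((5 + 2 * ln (real n)) * (1 + 4 * real n) * (2 + ln (real n)) / ((real n)\<^sup>2)\<^sup>2)"
    if "n \<ge> 1" for n
    unfolding S_def by (rule total_bound[OF assms(1) L0 GL that])
  have Th: "0 \<le> (Theta \<gamma> n)\<^sup>2 / (real n)\<^sup>2 \<and> (Theta \<gamma> n)\<^sup>2 / (real n)\<^sup>2 \<le> (real n)\<^sup>2" if "n \<ge> 3" for n
  proof (cases "\<gamma> > 2")
    case True then show ?thesis using that by (simp add: Theta_def power2_eq_square)
  next
    case False
    have "exp 1 \<le> real n" using exp_le that by linarith
    then have "ln (exp 1) \<le> ln (real n)" using that by (subst ln_le_cancel_iff) auto
    then have ln1: "ln (real n) \<ge> 1" by simp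
    have "(Theta \<gamma> n)\<^sup>2 / (real n)\<^sup>2 = (real n)\<^sup>2 / (ln (real n))\<^sup>2"
      using False that by (simp add: Theta_def power2_eq_square field_simps)
    also have "\<dots> \<le> (real n)\<^sup>2"
      using ln1 one_le_power[OF ln1, of 2] by (simp add: divide_le_eq mult_le_cancel_left1)
    finally show ?thesis by simp
  qed
  have lim: "(\<lambda>n. 8 * (L * c_gamma \<gamma>)\<^sup>2 * R n) \<longlonglongrightarrow> 0"
    unfolding R_def using tendsto_mult_right_zero[OF lim_aux] by simp
  have "(\<lambda>n. (Theta \<gamma> n)\<^sup>2 / (real n)\<^sup>2 * S n) \<longlonglongrightarrow> 0"
  proof (rule tendsto_sandwich[where f = "\<lambda>_. 0", OF _ _ tendsto_const lim])
    show "\<forall>\<^sub>F n in sequentially. 0 \<le> (Theta \<gamma> n)\<^sup>2 / (real n)\<^sup>2 * S n"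
      using eventually_ge_at_top[of 3] by eventually_elim (use Th S0 in auto)
    show "\<forall>\<^sub>F n in sequentially. (Theta \<gamma> n)\<^sup>2 / (real n)\<^sup>2 * S n \<le> 8 * (L * c_gamma \<gamma>)\<^sup>2 * R n"
      using eventually_ge_at_top[of 3]
    proof eventually_elim
      case (elim n)
      have "(Theta \<gamma> n)\<^sup>2 / (real n)\<^sup>2 * S n \<le> (real n)\<^sup>2 * S n"
        using Th[OF elim] S0[of n] elim by (intro mult_right_mono) auto
      also have "\<dots> \<le> (real n)\<^sup>2 * (8 * (L * c_gamma \<gamma>)\<^sup>2 * ((5 + 2 * ln (real n)) * (1 + 4 * real n) * (2 + ln (real n)) / ((real n)\<^sup>2)\<^sup>2))"
        using SB[of n] elim by (intro mult_left_mono) auto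
      finally show ?case unfolding R_def by (simp add: mult_ac)
    qed
  qed
  then show ?thesis unfolding S_def .
qed

end
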